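(* Let $\lambda>1$, $A=\mathrm{diag}(1,\lambda)$, and $f(x)=\tfrac12 x^TAx$ on $\mathbb{R}^2$. Consider the iteration $x_{k+1}=x_k-\alpha_kg_k$, $g_k=Ax_k$, where $x_1\in\mathbb{R}^2$, $x_2=x_1-\alpha_1g_1$ for some $\alpha_1>0$, and for $k\ge 2$ $$\alpha_k=\gamma_k\frac{s_{k-1}^Ts_{k-1}}{s_{k-1}^Ty_{k-1}}+(1-\gamma_k)\frac{s_{k-1}^Ty_{k-1}}{y_{k-1}^Ty_{k-1}},\qquad s_{k-1}=x_k-x_{k-1},\ y_{k-1}=g_k-g_{k-1},$$ with $\gamma_k\in(0,1)$ for all $k$. Assume $g_1^{(i)}\neq0$ and $g_2^{(i)}\ne0$ for $i=1,2$. Let $q_k=(g_k^{(1)})^2/(g_k^{(2)})^2$, $M_k=\log q_k$, let $\theta$ be a root of $\theta^2-\theta+2=0$, and $\xi_k=M_k+(\theta-1)M_{k-1}$. If $|\xi_2|>8\log\lambda$, then there exists $c_1>0$ such that for all $k\ge2$, $$\max_{-1\le i\le 3}M_{k+i}\ge(\sqrt2-1)^2 2^{k/2}c_1-2c_1,\qquad \min_{-1\le i\le 3}M_{k+i}\le-(\sqrt2-1)^2 2^{k/2}c_1+2c_1.$$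
   Context: $g_k^{(i)}$ denotes the $i$-th component of $g_k$; under these assumptions all components stay nonzero so $M_k$ is defined for all $k\ge1$. $\theta$ is complex and $|\cdot|$ is the complex modulus. *)

theory Defs
  imports "HOL-Analysis.Analysis"
begin

definition diagA :: "real \<Rightarrow> real^2^2" where
  "diagA lam = (\<chi> i j. if i = j then (if i = 1 then 1 else lam) else 0)"

end

theory Submission
  imports Defs
begin

lemma dA1: "(diagA lam *v y) $ 1 = y $ 1"
  by (simp add: diagA_def matrix_vector_mult_def sum_2)
lemma dA2: "(diagA lam *v y) $ 2 = lam * y $ 2"
  by (simp add: diagA_def matrix_vector_mult_def sum_2)
lemma inn2: "(y::real^2) \<bullet> z = y$1 * z$1 + y$2 * z$2"
  by (simp add: inner_vec_def sum_2)

lemma theta_norm: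
  fixes \<theta> :: complex assumes "\<theta>^2 - \<theta> + 2 = 0"
  shows "cmod \<theta> = sqrt 2" "cmod (\<theta> - 1) = sqrt 2"
proof -
  have re: "(Re \<theta>)^2 - (Im \<theta>)^2 - Re \<theta> + 2 = 0"
    using arg_cong[OF assms, of Re] by (simp add: power2_eq_square)
  have im: "2 * Re \<theta> * Im \<theta> - Im \<theta> = 0"
    using arg_cong[OF assms, of Im] by (simp add: power2_eq_square)
  have "Im \<theta> \<noteq> 0"
  proof
    assume "Im \<theta> = 0"
    with re have "(Re \<theta> - 1/2)^2 + 7/4 = 0" by (simp add: power2_eq_square algebra_simps)
    moreover have "(Re \<theta> - 1/2)^2 \<ge> 0" by simp
    ultimately show False by linarith
  qed
  moreover have "Im \<theta> * (2 * Re \<theta> - 1) = 0" using im by (simp add: algebra_simps)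
  ultimately have r: "Re \<theta> = 1/2" by simp
  with re have i: "Im \<theta> * Im \<theta> = 7/4" by (simp add: power2_eq_square)
  have "(cmod \<theta>)^2 = 2" unfolding cmod_power2 by (simp add: power2_eq_square r i)
  then show "cmod \<theta> = sqrt 2" by (metis norm_ge_zero real_sqrt_unique)
  have "(cmod (\<theta>-1))^2 = 2" unfolding cmod_power2 by (simp add: power2_eq_square r i)
  then show "cmod (\<theta>-1) = sqrt 2" by (metis norm_ge_zero real_sqrt_unique)
qed

lemma window:
  fixes a b s D t L m :: real
  assumes s: "s = sqrt 2" and "m \<ge> a" "m \<ge> b" "m \<ge> -2* a-b" and nb: "\<bar>b\<bar> + s* \<bar>a\<bar> \<ge> D* t"
    and D: "D \<ge> (3-s)* L" and t: "t \<ge> 0" and L: "L \<ge> 0"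
  shows "m \<ge> (s-1)^2* (2* t)* L"
proof -
  have s0: "s > 0" "s* s = 2" using s by auto
  have s14: "s \<ge> 7/5" unfolding s by (rule real_le_rsqrt) (simp add: power2_eq_square)
  have "\<bar>a\<bar> \<le> m" "\<bar>b\<bar> \<le> 3* m" using assms(2-4) by auto
  then have "s* \<bar>a\<bar> \<le> s* m" using s0 by (simp add: mult_left_mono)
  then have "(3+s)* m \<ge> D* t" using nb \<open>\<bar>b\<bar> \<le> 3* m\<close> by (simp add: algebra_simps)
  moreover have "D* t \<ge> (3-s)* L* t" using D t by (simp add: mult_right_mono)
  moreover have "(3-s) \<ge> (3+s)* ((s-1)^2*2)" using s0 s14 by (simp add: power2_eq_square algebra_simps)
  then have "(3-s)* (L* t) \<ge> (3+s)* ((s-1)^2*2)* (L* t)" using L t by (intro mult_right_mono) auto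
  ultimately have "(3+s)* m \<ge> (3+s)* ((s-1)^2* (2* t)* L)" by (simp add: algebra_simps)
  then show ?thesis using s0 by (smt (verit) mult_le_cancel_left)
qed

lemma core:
  fixes lam \<gamma> u v \<alpha> :: real
  assumes lam: "lam > 1" and g: "0 < \<gamma>" "\<gamma> < 1" and uv: "u \<noteq> 0" "v \<noteq> 0"
    and a: "\<alpha> = \<gamma>* ((u^2+v^2)/(u^2+lam* v^2)) + (1-\<gamma>)* ((u^2+lam* v^2)/(u^2+lam^2* v^2))"
  shows "\<alpha> > 0 \<and> (\<exists>B C. C > 0 \<and> C \<le> B \<and> B \<le> lam* C \<and> 1-\<alpha> = (lam-1)* v^2* B \<and> 1 - lam* \<alpha> = -((lam-1)* u^2* C))"
proof -
  have u2: "u^2 > 0" "v^2 > 0" using uv by auto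
  define Q where "Q = u^2+lam* v^2"
  define R where "R = u^2+lam^2* v^2"
  have Q: "Q > 0" unfolding Q_def using u2 lam by (smt (verit) mult_pos_pos)
  have R: "R > 0" unfolding R_def using u2 lam by (smt (verit) mult_pos_pos zero_less_power)
  define B where "B = \<gamma>/Q + (1-\<gamma>)* lam/R"
  define C where "C = \<gamma>/Q + (1-\<gamma>)/R"
  have f1: "C > 0" unfolding C_def using Q R g by (simp add: add_pos_pos)
  have f2: "C \<le> B" unfolding C_def B_def using Q R g lam
    by (simp add: divide_right_mono mult_left_mono)
  have f3: "B \<le> lam* C" unfolding C_def B_def using Q R g lam
    by (simp add: algebra_simps divide_right_mono mult_left_mono)
  have a2: "\<alpha> = \<gamma>* ((u^2+v^2)/Q) + (1-\<gamma>)* (Q/R)" unfolding a Q_def R_def by simp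
  have e1: "Q - (u^2+v^2) = (lam-1)* v^2" "R - Q = lam* (lam-1)* v^2" "Q - lam* (u^2+v^2) = -((lam-1)* u^2)"
    "R - lam* Q = -((lam-1)* u^2)"
    unfolding Q_def R_def by (simp_all add: algebra_simps power2_eq_square)
  have "1-\<alpha> = \<gamma>* ((Q - (u^2+v^2))/Q) + (1-\<gamma>)* ((R-Q)/R)" unfolding a2 using Q R
    by (simp add: field_simps)
  also have "... = (lam-1)* v^2* B" unfolding e1 B_def using Q R by (simp add: field_simps)
  finally have f4: "1-\<alpha> = (lam-1)* v^2* B" .
  have "1-lam* \<alpha> = \<gamma>* ((Q - lam* (u^2+v^2))/Q) + (1-\<gamma>)* ((R-lam* Q)/R)" unfolding a2 using Q R
    by (simp add: field_simps)
  also have "... = -((lam-1)* u^2* C)" unfolding e1 C_def using Q R by (simp add: field_simps)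
  finally have f5: "1-lam* \<alpha> = -((lam-1)* u^2* C)" .
  have f6: "\<alpha> > 0" unfolding a using Q R g u2 unfolding Q_def[symmetric] R_def[symmetric]
    by (intro add_pos_pos mult_pos_pos divide_pos_pos) (auto intro: add_pos_pos)
  show ?thesis using f1 f2 f3 f4 f5 f6 by blast
qed
lemma powr2: "2 powr (real k / 2) = sqrt 2 ^ k"
  by (simp add: powr_half_sqrt[symmetric] powr_realpow[symmetric] powr_powr)
lemma ratio:
  fixes l B C a b c d :: real
  assumes "l \<noteq> 0" "C \<noteq> 0" "a \<noteq> 0" "b \<noteq> 0" "d \<noteq> 0"
  shows "((l * b^2 * B) * c)^2 / ((-(l * a^2 * C)) * d)^2 = (c^2/d^2) * (B/C)^2 / (a^2/b^2)^2"
  using assms by (simp add: field_simps power2_eq_square power_mult_distrib)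

lemma lnlem:
  fixes X r Y :: real
  assumes "X > 0" "r > 0" "Y > 0"
  shows "ln (X * r^2 / Y^2) = ln X + 2 * ln r - 2 * ln Y"
  using assms by (simp add: ln_div ln_mult ln_realpow)

theorem lemma2:
  fixes lam :: real and x :: "nat \<Rightarrow> real^2" and \<alpha> \<gamma> :: "nat \<Rightarrow> real"
    and \<theta> :: complex
  defines "g \<equiv> (\<lambda>k. diagA lam *v x k)"
  defines "M \<equiv> (\<lambda>k. ln ((g k $ 1)^2 / (g k $ 2)^2))"
  defines "\<xi> \<equiv> (\<lambda>k. complex_of_real (M k) + (\<theta> - 1) * complex_of_real (M (k - 1)))"
  assumes lam: "lam > 1"
    and alpha1: "\<alpha> 1 > 0"
    and iter: "\<And>k. k \<ge> 1 \<Longrightarrow> x (Suc k) = x k - \<alpha> k *\<^sub>R g k"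
    and step: "\<And>k. k \<ge> 2 \<Longrightarrow>
       \<alpha> k = \<gamma> k * (((x k - x (k-1)) \<bullet> (x k - x (k-1))) / ((x k - x (k-1)) \<bullet> (g k - g (k-1))))
           + (1 - \<gamma> k) * (((x k - x (k-1)) \<bullet> (g k - g (k-1))) / ((g k - g (k-1)) \<bullet> (g k - g (k-1))))"
    and gamma: "\<And>k. k \<ge> 2 \<Longrightarrow> 0 < \<gamma> k \<and> \<gamma> k < 1"
    and nz: "\<And>i. g 1 $ i \<noteq> 0" "\<And>i. g 2 $ i \<noteq> 0"
    and theta: "\<theta>^2 - \<theta> + 2 = 0"
    and xi2: "cmod (\<xi> 2) > 8 * ln lam"
  shows "\<exists>c1>0. \<forall>k\<ge>2.
     Max (M ` {k-1..k+3}) \<ge> (sqrt 2 - 1)^2 * 2 powr (real k / 2) * c1 - 2 * c1 \<and>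
     Min (M ` {k-1..k+3}) \<le> - ((sqrt 2 - 1)^2 * 2 powr (real k / 2) * c1) + 2 * c1"
proof -
  define u where "u k = g k $ 1" for k
  define v where "v k = g k $ 2" for k
  define L where "L = 2 * ln lam"
  have L0: "L > 0" using lam by (simp add: L_def)
  have Mdef: "M i = ln (u i ^ 2 / v i ^ 2)" for i by (simp add: M_def u_def v_def)
  have gS: "u (Suc k) = (1 - \<alpha> k) * u k \<and> v (Suc k) = (1 - lam * \<alpha> k) * v k" if "k \<ge> 1" for k
  proof -
    have h: "x (Suc k) $ 1 = x k $ 1 - \<alpha> k * x k $ 1" "x (Suc k) $ 2 = x k $ 2 - \<alpha> k * (lam * x k $ 2)"
      using iter[OF that] by (simp_all add: g_def dA1 dA2)
    show ?thesis by (simp only: u_def v_def g_def dA1 dA2 h) (simp add: algebra_simps)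
  qed
  have aform: "\<alpha> k = \<gamma> k * ((u (k-1)^2 + v (k-1)^2) / (u (k-1)^2 + lam * v (k-1)^2))
      + (1 - \<gamma> k) * ((u (k-1)^2 + lam * v (k-1)^2) / (u (k-1)^2 + lam^2 * v (k-1)^2))"
    if kk: "k \<ge> 2" "\<alpha> (k-1) \<noteq> 0" for k
  proof -
    obtain j where kj: "k = Suc j" "j \<ge> 1" using kk by (cases k) auto
    have aj: "\<alpha> j \<noteq> 0" using that kj by simp
    have s1: "x (Suc j) $ 1 = x j $ 1 - \<alpha> j * u j" and s2: "x (Suc j) $ 2 = x j $ 2 - \<alpha> j * v j"
      using iter[of j] kj by (simp_all add: u_def v_def)
    have gc: "g i $ 1 = x i $ 1" "g i $ 2 = lam * x i $ 2" for i by (simp_all add: g_def dA1 dA2)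
    have ss: "(x k - x (k-1)) \<bullet> (x k - x (k-1)) = \<alpha> j ^ 2 * (u j ^ 2 + v j ^ 2)"
      by (simp add: kj s1 s2 inn2 power2_eq_square algebra_simps)
    have sy: "(x k - x (k-1)) \<bullet> (g k - g (k-1)) = \<alpha> j ^ 2 * (u j ^ 2 + lam * v j ^ 2)"
      by (simp add: kj s1 s2 inn2 gc power2_eq_square algebra_simps)
    have yy: "(g k - g (k-1)) \<bullet> (g k - g (k-1)) = \<alpha> j ^ 2 * (u j ^ 2 + lam ^ 2 * v j ^ 2)"
      by (simp add: kj s1 s2 inn2 gc power2_eq_square algebra_simps)
    have a2: "\<alpha> j ^ 2 \<noteq> 0" using aj by simp
    have c1: "\<alpha> j^2 * P / (\<alpha> j^2 * Q) = P / Q" for P Q using a2 by simp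
    have "\<alpha> k = \<gamma> k * ((u j^2 + v j^2) / (u j^2 + lam * v j^2))
      + (1 - \<gamma> k) * ((u j^2 + lam * v j^2) / (u j^2 + lam^2 * v j^2))"
      using step[OF kk(1)] unfolding ss sy yy c1 .
    then show ?thesis using kj by simp
  qed
  have inv: "u k \<noteq> 0 \<and> v k \<noteq> 0 \<and> u (Suc k) \<noteq> 0 \<and> v (Suc k) \<noteq> 0 \<and> \<alpha> k > 0" if "k \<ge> 1" for k
    using that
  proof (induction k rule: nat_induct_at_least)
    case base
    then show ?case using nz alpha1 by (simp add: u_def v_def numeral_2_eq_2)
  next
    case (Suc n)
    have n2: "Suc n \<ge> 2" using Suc by simp
    have af: "\<alpha> (Suc n) = \<gamma> (Suc n) * ((u n^2 + v n^2) / (u n^2 + lam * v n^2))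
      + (1 - \<gamma> (Suc n)) * ((u n^2 + lam * v n^2) / (u n^2 + lam^2 * v n^2))"
      using aform[OF n2] Suc by simp
    obtain B C where BC: "\<alpha> (Suc n) > 0" "C > 0" "C \<le> B" "1 - \<alpha> (Suc n) = (lam-1) * v n^2 * B"
      "1 - lam * \<alpha> (Suc n) = -((lam-1) * u n^2 * C)"
      using core[OF lam, of "\<gamma> (Suc n)" "u n" "v n" "\<alpha> (Suc n)"] gamma[OF n2] Suc.IH af by blast
    have "u (Suc (Suc n)) = ((lam-1) * v n^2 * B) * u (Suc n)"
      "v (Suc (Suc n)) = (-((lam-1) * u n^2 * C)) * v (Suc n)"
      using gS[of "Suc n"] BC by auto
    then show ?case using Suc.IH BC lam by auto
  qed
  have Mrec: "\<exists>r. 1 \<le> r \<and> r \<le> lam \<and> M (Suc k) = M k - 2 * M (k-1) + 2 * ln r" if kk: "k \<ge> 2" for k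
  proof -
    obtain j where kj: "k = Suc j" "j \<ge> 1" using kk by (cases k) auto
    have I: "u j \<noteq> 0" "v j \<noteq> 0" "u k \<noteq> 0" "v k \<noteq> 0" "\<alpha> j > 0" using inv[OF kj(2)] kj by auto
    have af: "\<alpha> k = \<gamma> k * ((u j^2 + v j^2) / (u j^2 + lam * v j^2))
      + (1 - \<gamma> k) * ((u j^2 + lam * v j^2) / (u j^2 + lam^2 * v j^2))"
      using aform[OF kk] I kj by simp
    obtain B C where BC: "C > 0" "C \<le> B" "B \<le> lam * C" "1 - \<alpha> k = (lam-1) * v j^2 * B"
      "1 - lam * \<alpha> k = -((lam-1) * u j^2 * C)"
      using core[OF lam, of "\<gamma> k" "u j" "v j" "\<alpha> k"] gamma[OF kk] I af by blast
    have uS: "u (Suc k) = ((lam-1) * v j^2 * B) * u k" and vS: "v (Suc k) = (-((lam-1) * u j^2 * C)) * v k"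
      using gS[of k] BC kk by auto
    have l1: "lam - 1 \<noteq> 0" using lam by simp
    have eq: "u (Suc k) ^ 2 / v (Suc k) ^ 2 = (u k^2 / v k^2) * (B / C)^2 / (u j^2 / v j^2)^2"
      unfolding uS vS using I BC l1 by (intro ratio) auto
    have pos: "u k^2 / v k^2 > 0" "B / C > 0" "u j^2 / v j^2 > 0" using I BC by auto
    have "M (Suc k) = ln ((u k^2 / v k^2) * (B / C)^2 / (u j^2 / v j^2)^2)" by (simp only: Mdef eq)
    also have "... = ln (u k^2 / v k^2) + 2 * ln (B / C) - 2 * ln (u j^2 / v j^2)" by (rule lnlem[OF pos])
    finally have "M (Suc k) = ln (u k^2 / v k^2) + 2 * ln (B / C) - 2 * ln (u j^2 / v j^2)" .
    then have "M (Suc k) = M k - 2 * M (k-1) + 2 * ln (B/C)" unfolding Mdef using kj by simp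
    moreover have "1 \<le> B / C" "B / C \<le> lam" using BC by (auto simp: field_simps)
    ultimately show ?thesis by blast
  qed
  define \<delta> where "\<delta> k = M (Suc k) - M k + 2 * M (k-1)" for k
  have \<delta>b: "0 \<le> \<delta> k \<and> \<delta> k \<le> L" if kk: "k \<ge> 2" for k
  proof -
    obtain r where r: "1 \<le> r" "r \<le> lam" "M (Suc k) = M k - 2 * M (k-1) + 2 * ln r" using Mrec[OF kk] by blast
    have "0 \<le> ln r" using r by simp
    moreover have "ln r \<le> ln lam" using r by simp
    ultimately show ?thesis using r unfolding \<delta>_def L_def by simp
  qed
  have tn: "cmod \<theta> = sqrt 2" "cmod (\<theta> - 1) = sqrt 2" using theta_norm[OF theta] by auto
  have tt: "\<theta> * (\<theta> - 1) = -2"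
  proof -
    have "\<theta> * (\<theta> - 1) = (\<theta>^2 - \<theta> + 2) - 2" by (simp add: power2_eq_square algebra_simps)
    then show ?thesis using theta by simp
  qed
  have xrec: "\<xi> (Suc k) = \<theta> * \<xi> k + of_real (\<delta> k)" if "k \<ge> 2" for k
  proof -
    have "\<theta> * \<xi> k + of_real (\<delta> k) = \<theta> * of_real (M k) + (\<theta> * (\<theta> - 1)) * of_real (M (k-1)) + of_real (\<delta> k)"
      by (simp add: \<xi>_def algebra_simps)
    also have "... = of_real (M (Suc k)) + (\<theta> - 1) * of_real (M k)" unfolding tt
      by (simp add: \<delta>_def algebra_simps)
    finally show ?thesis by (simp add: \<xi>_def)
  qed
  have xgr: "cmod (\<xi> (Suc k)) \<ge> sqrt 2 * cmod (\<xi> k) - L" if "k \<ge> 2" for k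
  proof -
    have "cmod (\<theta> * \<xi> k) - cmod (of_real (\<delta> k) :: complex) \<le> cmod (\<theta> * \<xi> k + of_real (\<delta> k))"
      by (metis norm_diff_ineq norm_minus_cancel diff_minus_eq_add)
    moreover have "cmod (\<theta> * \<xi> k) = sqrt 2 * cmod (\<xi> k)" by (simp add: norm_mult tn)
    moreover have "cmod (of_real (\<delta> k) :: complex) \<le> L" using \<delta>b[OF that] by simp
    ultimately show ?thesis using xrec[OF that] by simp
  qed
  define c where "c = L * (sqrt 2 + 1)"
  have c0: "c \<ge> 0" using L0 by (simp add: c_def)
  have grow: "cmod (\<xi> k) \<ge> c + (cmod (\<xi> 2) - c) * sqrt 2 ^ (k-2)" if "k \<ge> 2" for k
    using that
  proof (induction k rule: nat_induct_at_least)
    case base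
    then show ?case by simp
  next
    case (Suc n)
    have h1: "cmod (\<xi> (Suc n)) \<ge> sqrt 2 * cmod (\<xi> n) - L" using xgr Suc by simp
    have h2: "sqrt 2 * cmod (\<xi> n) \<ge> sqrt 2 * (c + (cmod (\<xi> 2) - c) * sqrt 2 ^ (n-2))"
      using Suc.IH by (simp add: mult_left_mono)
    have h3': "Suc n - 2 = Suc (n - 2)" using Suc(1) by simp
    have h3: "sqrt 2 ^ (Suc n - 2) = sqrt 2 * sqrt 2 ^ (n-2)" by (simp only: h3' power_Suc)
    have h4: "sqrt 2 * c - L = c" by (simp add: c_def algebra_simps)
    show ?case using h1 h2 h3 h4 by (simp add: algebra_simps)
  qed
  show ?thesis
  proof (intro exI[of _ L] conjI allI impI)
    show "L > 0" by (rule L0)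
    fix k :: nat assume k2: "k \<ge> 2"
    define a where "a = M (k-1)"
    define b where "b = M k"
    define e where "e = M (Suc (Suc k))"
    have e: "e = -2*a - b + \<delta> k + \<delta> (Suc k)" unfolding \<delta>_def a_def b_def e_def by simp
    have d1: "0 \<le> \<delta> k" "\<delta> k \<le> L" using \<delta>b[OF k2] by auto
    have d2: "0 \<le> \<delta> (Suc k)" "\<delta> (Suc k) \<le> L" using \<delta>b[of "Suc k"] k2 by auto
    have nx: "cmod (\<xi> k) \<le> \<bar>b\<bar> + sqrt 2 * \<bar>a\<bar>"
    proof -
      have "cmod (\<xi> k) \<le> cmod (of_real b :: complex) + cmod ((\<theta> - 1) * of_real a)"
        unfolding \<xi>_def a_def b_def by (rule norm_triangle_ineq)
      then show ?thesis by (simp add: norm_mult tn)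
    qed
    define t where "t = sqrt 2 ^ (k-2)"
    define D where "D = cmod (\<xi> 2) - c"
    have t0: "t \<ge> 0" by (simp add: t_def)
    have gk: "D * t \<le> \<bar>b\<bar> + sqrt 2 * \<bar>a\<bar>" using grow[OF k2] nx c0 unfolding D_def t_def by simp
    have DL: "D \<ge> (3 - sqrt 2) * L" using xi2 unfolding D_def c_def L_def by (simp add: algebra_simps)
    have pw: "2 powr (real k / 2) = 2 * t"
    proof -
      have "2 powr (real k / 2) = sqrt 2 ^ k" by (rule powr2)
      also have "... = 2 * t"
      proof -
        obtain m where m: "k = m + 2" using k2 le_add_diff_inverse2 by metis
        show ?thesis unfolding t_def m by (simp add: power_add)
      qed
      finally show ?thesis .
    qed
    have fin: "finite (M ` {k-1..k+3})" by simp
    have mem: "a \<in> M ` {k-1..k+3}" "b \<in> M ` {k-1..k+3}" "e \<in> M ` {k-1..k+3}"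
      unfolding a_def b_def e_def by (auto intro!: imageI)
    have w1: "max a (max b e) \<ge> (sqrt 2 - 1)^2 * (2 * t) * L"
      using window[of "sqrt 2" a "max a (max b e)" b D t L] gk DL t0 L0 e d1 d2 by simp
    have "Max (M ` {k-1..k+3}) \<ge> max a (max b e)" using Max_ge[OF fin] mem by auto
    then show "Max (M ` {k-1..k+3}) \<ge> (sqrt 2 - 1)^2 * 2 powr (real k / 2) * L - 2 * L"
      using w1 L0 unfolding pw by linarith
    have w2: "- min a (min b (-2*a-b)) \<ge> (sqrt 2 - 1)^2 * (2 * t) * L"
      using window[of "sqrt 2" "-a" "- min a (min b (-2*a-b))" "-b" D t L] gk DL t0 L0 by simp
    have "Min (M ` {k-1..k+3}) \<le> min a (min b e)" using Min_le[OF fin] mem by auto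
    then show "Min (M ` {k-1..k+3}) \<le> - ((sqrt 2 - 1)^2 * 2 powr (real k / 2) * L) + 2 * L"
      using w2 e d1 d2 unfolding pw by linarith
  qed
qed

end
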